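(* Consider an iteration of the sig-cGA optimizing $\mathrm{DLB}$ in which the current frequency vector $\tau$ lies in $\{\frac12,1-\frac1n\}^n$. Then for every $i\in[1..n]$, a $1$ is appended to the history $H_i$ in this iteration (i.e., the winner $z$ has $z_i=1$) with probability at least $\tau_i$.
   Context: Let $n$ be an even positive integer. For $x\in\{0,1\}^n$ consider the blocks $(x_{2\ell+1},x_{2\ell+2})$, $\ell=0,\dots,\frac n2-1$. If $x\neq(1,\dots,1)$, let $m$ be the smallest $\ell$ with $x_{2\ell+1}\neq 1$ or $x_{2\ell+2}\neq 1$, and define $\mathrm{DLB}(x)=2m+1$ if $x_{2m+1}+x_{2m+2}=0$ and $\mathrm{DLB}(x)=2m$ if $x_{2m+1}+x_{2m+2}=1$; set $\mathrm{DLB}(1,\dots,1)=n$. In an iteration of the sig-cGA with current frequency vector $\tau$, two individuals $x,y$ are sampled independently, each bit $j$ being $1$ independently with probability $\tau_j$; the winner $z$ is the one with larger $\mathrm{DLB}$-value (chosen uniformly at random in case of a tie); then for each $i$ the bit $z_i$ is appended to the history $H_i$ (after which the frequencies are possibly updated). *)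

theory Defs
  imports "HOL-Probability.Probability"
begin

text \<open>Bit strings of length n are modelled as functions x :: nat \<Rightarrow> bool, bit j (1-based,
  j \<in> {1..n}) being x j; True encodes 1. Bits outside {1..n} are fixed to False.\<close>

definition DLB :: "nat \<Rightarrow> (nat \<Rightarrow> bool) \<Rightarrow> nat" where
  "DLB n x =
    (if (\<forall>j\<in>{1..n}. x j) then n
     else (let m = (LEAST l. \<not> x (2*l+1) \<or> \<not> x (2*l+2)) in
           if \<not> x (2*m+1) \<and> \<not> x (2*m+2) then 2*m+1 else 2*m))"

definition sample :: "nat \<Rightarrow> (nat \<Rightarrow> real) \<Rightarrow> (nat \<Rightarrow> bool) pmf" where
  "sample n \<tau> = Pi_pmf {1..n} False (\<lambda>j. bernoulli_pmf (\<tau> j))"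

definition winner :: "nat \<Rightarrow> (nat \<Rightarrow> bool) \<Rightarrow> (nat \<Rightarrow> bool) \<Rightarrow> (nat \<Rightarrow> bool) pmf" where
  "winner n x y =
    (if DLB n y < DLB n x then return_pmf x
     else if DLB n x < DLB n y then return_pmf y
     else map_pmf (\<lambda>b. if b then x else y) (bernoulli_pmf (1/2)))"

definition sigcga_winner :: "nat \<Rightarrow> (nat \<Rightarrow> real) \<Rightarrow> (nat \<Rightarrow> bool) pmf" where
  "sigcga_winner n \<tau> =
    bind_pmf (sample n \<tau>) (\<lambda>x. bind_pmf (sample n \<tau>) (\<lambda>y. winner n x y))"

end

theory Submission
  imports Defs
begin
definition Wf :: "nat \<Rightarrow> nat \<Rightarrow> bool \<Rightarrow> bool \<Rightarrow> real" where
  "Wf v v' a a' = (if v' < v then of_bool a else if v < v' then of_bool a' else (of_bool a + of_bool a')/2)"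


lemma prob_bind: "measure_pmf.prob (bind_pmf M f) A = measure_pmf.expectation M (\<lambda>x. measure_pmf.prob (f x) A)"
  unfolding measure_pmf_bind
  apply (rule measure_pmf.measure_bind[where N="count_space UNIV"])
  using measurable_measure_pmf[of f] apply (simp add: measurable_cong_sets)
  apply simp
  done

lemma prob_bind_ge:
  assumes "\<And>x. x \<in> set_pmf M \<Longrightarrow> measure_pmf.prob (f x) A \<ge> c"
  shows "measure_pmf.prob (bind_pmf M f) A \<ge> c"
proof -
  have "measure_pmf.expectation M (\<lambda>x. c) \<le> measure_pmf.expectation M (\<lambda>x. measure_pmf.prob (f x) A)"
    apply (rule integral_mono_AE)
    apply (auto intro!: measure_pmf.integrable_const_bound[where B=1] simp: AE_measure_pmf_iff assms)
    done
  then show ?thesis by (simp add: prob_bind)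
qed

lemma prob_bind_bern:
  assumes "0 \<le> p" "p \<le> 1"
  shows "measure_pmf.prob (bind_pmf (bernoulli_pmf p) f) A = p * measure_pmf.prob (f True) A + (1-p) * measure_pmf.prob (f False) A"
  using assms by (simp add: prob_bind)

lemma bind3_commute:
  "bind_pmf A (\<lambda>a. bind_pmf B (\<lambda>c. bind_pmf C (\<lambda>r. F a c r))) = bind_pmf C (\<lambda>r. bind_pmf A (\<lambda>a. bind_pmf B (\<lambda>c. F a c r)))"
  by (simp add: bind_commute_pmf[of B C] bind_commute_pmf[of A C])


lemma prob_winner:
  "measure_pmf.prob (winner n x y) {z. z i} = (if DLB n y < DLB n x then of_bool (x i) else if DLB n x < DLB n y then of_bool (y i) else (of_bool (x i) + of_bool (y i))/2)"
proof -
  have e: "Collect (\<lambda>b. b) = {True}" "Collect Not = {False}" by auto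
  show ?thesis unfolding winner_def
    by (auto simp: measure_pmf_single indicator_def vimage_def e)
qed

lemma prob_winner':
  "measure_pmf.prob (winner n x y) {z. z i} = Wf (DLB n x) (DLB n y) (x i) (y i)"
  by (simp add: prob_winner Wf_def)

lemma dlb_first_false:
  assumes "k \<in> {1..n}" "\<not> x k" "\<forall>k'. 1 \<le> k' \<and> k' < k \<longrightarrow> x k'"
  shows "DLB n x = (if \<not>x(2*((k-1) div 2)+1) \<and> \<not>x(2*((k-1) div 2)+2) then 2*((k-1) div 2)+1 else 2*((k-1) div 2))"
proof -
  define l where "l = (k-1) div 2"
  have nall: "\<not> (\<forall>j\<in>{1..n}. x j)" using assms by blast
  have kk: "k = 2*l+1 \<or> k = 2*l+2" using assms(1) unfolding l_def by auto
  have P: "\<not> x (2*l+1) \<or> \<not> x (2*l+2)"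
    using assms(2) kk by auto
  have L: "(LEAST l. \<not> x (2*l+1) \<or> \<not> x (2*l+2)) = l"
  proof (rule Least_equality)
    show "\<not> x (2*l+1) \<or> \<not> x (2*l+2)" by (fact P)
    fix l' assume a: "\<not> x (2*l'+1) \<or> \<not> x (2*l'+2)"
    show "l \<le> l'"
    proof (rule ccontr)
      assume "\<not> l \<le> l'"
      then have "2*l'+2 < k" using kk by auto
      then show False using a assms(3) by auto
    qed
  qed
  show ?thesis unfolding DLB_def if_not_P[OF nall] Let_def L l_def[symmetric] by (rule refl)
qed

lemma first_false_ex:
  assumes "(k::nat) \<in> {1..m}" "\<not> x k"
  obtains k0 where "k0 \<in> {1..m}" "\<not> x k0" "\<forall>k'. 1 \<le> k' \<and> k' < k0 \<longrightarrow> x k'"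
proof -
  define k0 where "k0 = (LEAST k. k \<in> {1..m} \<and> \<not> x k)"
  have h: "k0 \<in> {1..m} \<and> \<not> x k0" unfolding k0_def by (rule LeastI[of _ k]) (use assms in auto)
  have "\<forall>k'. 1 \<le> k' \<and> k' < k0 \<longrightarrow> x k'"
  proof (intro allI impI)
    fix k' assume "1 \<le> k' \<and> k' < k0"
    moreover have "k' < k0 \<Longrightarrow> \<not> (k' \<in> {1..m} \<and> \<not> x k')" unfolding k0_def by (rule not_less_Least)
    ultimately show "x k'" using h by auto
  qed
  then show ?thesis using h that by blast
qed

lemma dlb_ge:
  assumes "2*l+2 \<le> n" "\<forall>k\<in>{1..2*l+2}. x k"
  shows "DLB n x \<ge> 2*l+2"
proof (cases "\<forall>j\<in>{1..n}. x j")
  case True then show ?thesis using assms by (simp add: DLB_def)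
next
  case False
  then obtain k where "k \<in> {1..n}" "\<not> x k" by blast
  then obtain k0 where k0: "k0 \<in> {1..n}" "\<not> x k0" "\<forall>k'. 1 \<le> k' \<and> k' < k0 \<longrightarrow> x k'"
    by (rule first_false_ex)
  have "k0 > 2*l+2" using k0(1,2) assms(2) by (meson atLeastAtMost_iff not_le)
  then have "2*((k0-1) div 2) \<ge> 2*l+2" by auto presburger
  then show ?thesis using dlb_first_false[OF k0] by auto
qed



definition ex :: "real \<Rightarrow> (bool \<Rightarrow> real) \<Rightarrow> real" where
  "ex p f = p * f True + (1-p) * f False"

definition shape :: "nat \<Rightarrow> (bool \<Rightarrow> bool \<Rightarrow> nat) \<Rightarrow> bool" where
  "shape b d = ((\<exists>D. D < 2*b \<and> (\<forall>a c. d a c = D)) \<or>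
     ((\<forall>a c. \<not>(a\<and>c) \<longrightarrow> d a c = (if \<not>a \<and> \<not>c then 2*b+1 else 2*b)) \<and> (\<forall>a c. a \<and> c \<longrightarrow> d a c \<ge> 2*b+2)))"

lemma arith_main:
  assumes p: "0 \<le> p" "p \<le> 1" and q: "0 \<le> q" "q \<le> 1" "(1-q)^2 \<le> q"
    and sx: "shape b dx" and sy: "shape b dy"
  shows "p \<le> ex p (\<lambda>a. ex q (\<lambda>c. ex p (\<lambda>a'. ex q (\<lambda>c'. Wf (dx a c) (dy a' c') a a'))))"
proof -
  consider (A) D where "D < 2*b" "\<forall>a c. dx a c = D"
    | (B) "\<forall>a c. \<not>(a\<and>c) \<longrightarrow> dx a c = (if \<not>a \<and> \<not>c then 2*b+1 else 2*b)" "\<forall>a c. a \<and> c \<longrightarrow> dx a c \<ge> 2*b+2"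
    using sx unfolding shape_def by blast
  then show ?thesis
  proof cases
    case A
    consider (A') D' where "D' < 2*b" "\<forall>a c. dy a c = D'"
      | (B') "\<forall>a c. \<not>(a\<and>c) \<longrightarrow> dy a c = (if \<not>a \<and> \<not>c then 2*b+1 else 2*b)" "\<forall>a c. a \<and> c \<longrightarrow> dy a c \<ge> 2*b+2"
      using sy unfolding shape_def by blast
    then show ?thesis
    proof cases
      case A'
      have W: "\<And>a c a' c'. Wf (dx a c) (dy a' c') a a' = (if D' < D then of_bool a else if D < D' then of_bool a' else (of_bool a + of_bool a')/2)"
        using A A' by (simp add: Wf_def)
      have "ex p (\<lambda>a. ex q (\<lambda>c. ex p (\<lambda>a'. ex q (\<lambda>c'. Wf (dx a c) (dy a' c') a a')))) = p"
        unfolding W by (cases "D < D'"; cases "D' < D") (simp_all add: ex_def algebra_simps add_divide_distrib)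
      then show ?thesis by simp
    next
      case B'
      have ge: "dy a c \<ge> 2*b" for a c using B' by (cases a; cases c) force+
      have "Wf (dx a c) (dy a' c') a a' = of_bool a'" for a c a' c'
        using A ge[of a' c'] by (simp add: Wf_def)
      then show ?thesis using p q by (simp add: ex_def algebra_simps)
    qed
  next
    case B
    consider (A') D' where "D' < 2*b" "\<forall>a c. dy a c = D'"
      | (B') "\<forall>a c. \<not>(a\<and>c) \<longrightarrow> dy a c = (if \<not>a \<and> \<not>c then 2*b+1 else 2*b)" "\<forall>a c. a \<and> c \<longrightarrow> dy a c \<ge> 2*b+2"
      using sy unfolding shape_def by blast
    then show ?thesis
    proof cases
      case A'
      have ge: "dx a c \<ge> 2*b" for a c using B by (cases a; cases c) force+
      have "Wf (dx a c) (dy a' c') a a' = of_bool a" for a c a' c'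
        using A' ge[of a c] by (simp add: Wf_def)
      then show ?thesis using p q by (simp add: ex_def algebra_simps)
    next
      case B'
      have x1: "dx False False = 2*b+1" "dx True False = 2*b" "dx False True = 2*b" "dx True True \<ge> 2*b+2"
        using B by auto
      have y1: "dy False False = 2*b+1" "dy True False = 2*b" "dy False True = 2*b" "dy True True \<ge> 2*b+2"
        using B' by auto
      have "ex p (\<lambda>a. ex q (\<lambda>c. ex p (\<lambda>a'. ex q (\<lambda>c'. Wf (dx a c) (dy a' c') a a'))))
          = p + p*(1-p)*(q - (1-q)^2)"
      proof -
        define rk :: "bool \<Rightarrow> bool \<Rightarrow> nat" where "rk a c = (if a \<and> c then 2 else if \<not>a \<and> \<not>c then 1 else 0)" for a c
        have W: "Wf (dx a c) (dy a' c') a a' = Wf (rk a c) (rk a' c') a a'" for a c a' c'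
          using x1 y1 by (cases a; cases c; cases a'; cases c') (simp_all add: Wf_def rk_def)
        show ?thesis unfolding W
          apply (simp add: ex_def Wf_def rk_def)
          apply (simp add: power2_eq_square field_simps)
          done
      qed
      moreover have "0 \<le> p*(1-p)*(q - (1-q)^2)" using p q by simp
      ultimately show ?thesis by simp
    qed
  qed
qed



lemma block_facts:
  assumes "even (n::nat)" "i \<in> {1..n}" "b = (i-1) div 2" "j = (if odd i then i+1 else i-1)"
  shows "i \<noteq> j" "j \<in> {1..n}" "2*b+2 \<le> n" "2*b < i" "2*b < j"
    "(i = 2*b+1 \<and> j = 2*b+2) \<or> (i = 2*b+2 \<and> j = 2*b+1)"
  using assms by (cases "odd i"; simp; presburger)+

lemma dlb_shape:
  assumes "even (n::nat)" "i \<in> {1..n}" "b = (i-1) div 2" "j = (if odd i then i+1 else i-1)"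
  shows "shape b (\<lambda>a c. DLB n (r(j:=c, i:=a)))"
proof -
  note bf = block_facts[OF assms]
  show ?thesis
  proof (cases "\<forall>k\<in>{1..2*b}. r k")
    case False
    then obtain k where "k \<in> {1..2*b}" "\<not> r k" by blast
    then obtain k0 where k0: "k0 \<in> {1..2*b}" "\<not> r k0" "\<forall>k'. 1 \<le> k' \<and> k' < k0 \<longrightarrow> r k'"
      by (rule first_false_ex)
    define l where "l = (k0-1) div 2"
    have l2: "2*l+2 \<le> 2*b" using k0(1) unfolding l_def by simp presburger
    define D where "D = (if \<not>r(2*l+1) \<and> \<not>r(2*l+2) then 2*l+1 else 2*l)"
    have "DLB n (r(j:=c, i:=a)) = D" for a c
    proof -
      have "DLB n (r(j:=c, i:=a)) = (if \<not>(r(j:=c, i:=a))(2*l+1) \<and> \<not>(r(j:=c, i:=a))(2*l+2) then 2*l+1 else 2*l)"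
        unfolding l_def
        apply (rule dlb_first_false)
        using k0 bf by auto
      also have "\<dots> = D" unfolding D_def using l2 bf by auto
      finally show ?thesis .
    qed
    moreover have "D < 2*b" unfolding D_def using l2 by auto
    ultimately show ?thesis unfolding shape_def by blast
  next
    case True
    have A: "DLB n (r(j:=c, i:=a)) = (if \<not>a \<and> \<not>c then 2*b+1 else 2*b)" if "\<not>(a\<and>c)" for a c
    proof -
      let ?x = "r(j:=c, i:=a)"
      define k0 where "k0 = (if ?x (2*b+1) then 2*b+2 else 2*b+1)"
      have "DLB n ?x = (if \<not>?x(2*((k0-1) div 2)+1) \<and> \<not>?x(2*((k0-1) div 2)+2) then 2*((k0-1) div 2)+1 else 2*((k0-1) div 2))"
        apply (rule dlb_first_false)
        using bf True that unfolding k0_def by (auto simp: less_Suc_eq)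
      moreover have "(k0-1) div 2 = b" unfolding k0_def by auto
      ultimately show ?thesis using bf by auto
    qed
    have B: "DLB n (r(j:=c, i:=a)) \<ge> 2*b+2" if "a \<and> c" for a c
      apply (rule dlb_ge)
      using bf True that by (auto simp: le_Suc_eq)
    show ?thesis unfolding shape_def using A B by blast
  qed
qed



lemma prob_bind_bern_ex:
  assumes "0 \<le> p" "p \<le> 1"
  shows "measure_pmf.prob (bind_pmf (bernoulli_pmf p) f) A = ex p (\<lambda>a. measure_pmf.prob (f a) A)"
  using assms by (simp add: prob_bind ex_def algebra_simps)

theorem corollary22:
  fixes n :: nat and \<tau> :: "nat \<Rightarrow> real" and i :: nat
  assumes "even n" and "n > 0"
    and "\<forall>j\<in>{1..n}. \<tau> j \<in> {1/2, 1 - 1 / real n}"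
    and "i \<in> {1..n}"
  shows "measure_pmf.prob (sigcga_winner n \<tau>) {z. z i} \<ge> \<tau> i"
proof -
  define b where "b = (i-1) div 2"
  define j where "j = (if odd i then i+1 else i-1)"
  note bf = block_facts[OF assms(1,4) b_def j_def]
  define S where "S = {1..n} - {i,j}"
  define p where "p = \<tau> i"
  define q where "q = \<tau> j"
  have n2: "n \<ge> 2" using assms(1,2) by presburger
  have tv: "0 \<le> \<tau> k \<and> \<tau> k \<le> 1" if "k \<in> {1..n}" for k
  proof -
    have h: "\<tau> k = 1/2 \<or> \<tau> k = 1 - 1/real n" using assms(3) that by auto
    have "0 \<le> 1/real n" "1/real n \<le> 1" using n2 by auto
    then show ?thesis using h by auto
  qed
  have p: "0 \<le> p" "p \<le> 1" using tv assms(4) unfolding p_def by auto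
  have q: "0 \<le> q" "q \<le> 1" using tv bf(2) unfolding q_def by auto
  have q2: "(1-q)^2 \<le> q"
  proof -
    have "q = 1/2 \<or> q = 1 - 1/real n" using assms(3) bf(2) unfolding q_def by auto
    then show ?thesis
    proof
      assume qh: "q = 1/2" show ?thesis unfolding qh by (simp add: power2_eq_square)
    next
      assume qq: "q = 1 - 1/real n"
      have "1/real n \<le> 1/2" using n2 by (simp add: field_simps)
      moreover have "(1/real n)^2 \<le> 1/real n" using n2 by (simp add: power2_eq_square field_simps)
      ultimately show ?thesis unfolding qq by simp
    qed
  qed
  define B where "B = (\<lambda>k. bernoulli_pmf (\<tau> k))"
  define R where "R = Pi_pmf S False B"
  have fS: "finite S" "i \<notin> insert j S" "j \<notin> S" using bf unfolding S_def by auto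
  have Sins: "{1..n} = insert i (insert j S)" using bf assms(4) unfolding S_def by auto
  have samp: "sample n \<tau> = bind_pmf R (\<lambda>r. bind_pmf (B i) (\<lambda>a. bind_pmf (B j) (\<lambda>c. return_pmf (r(j:=c, i:=a)))))"
  proof -
    have "sample n \<tau> = bind_pmf (B i) (\<lambda>a. bind_pmf (B j) (\<lambda>c. bind_pmf R (\<lambda>r. return_pmf (r(j:=c, i:=a)))))"
      unfolding sample_def Sins R_def B_def[symmetric]
      using fS by (simp add: Pi_pmf_insert' bind_assoc_pmf bind_return_pmf)
    then show ?thesis using bind3_commute[of "B i" "B j" R] by simp
  qed
  define u :: "(nat \<Rightarrow> bool) \<Rightarrow> bool \<Rightarrow> bool \<Rightarrow> nat \<Rightarrow> bool" where "u = (\<lambda>r a c. r(j:=c, i:=a))"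
  have main: "sigcga_winner n \<tau> = bind_pmf R (\<lambda>r. bind_pmf R (\<lambda>r'.
     bind_pmf (B i) (\<lambda>a. bind_pmf (B j) (\<lambda>c. bind_pmf (B i) (\<lambda>a'. bind_pmf (B j) (\<lambda>c'. winner n (u r a c) (u r' a' c')))))))"
  proof -
    have "sigcga_winner n \<tau> = bind_pmf R (\<lambda>r. bind_pmf (B i) (\<lambda>a. bind_pmf (B j) (\<lambda>c. bind_pmf R (\<lambda>r'.
     bind_pmf (B i) (\<lambda>a'. bind_pmf (B j) (\<lambda>c'. winner n (u r a c) (u r' a' c')))))))"
      unfolding sigcga_winner_def samp u_def by (simp add: bind_assoc_pmf bind_return_pmf)
    also have "\<dots> = bind_pmf R (\<lambda>r. bind_pmf R (\<lambda>r'.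
     bind_pmf (B i) (\<lambda>a. bind_pmf (B j) (\<lambda>c. bind_pmf (B i) (\<lambda>a'. bind_pmf (B j) (\<lambda>c'. winner n (u r a c) (u r' a' c')))))))"
      by (rule bind_pmf_cong[OF refl], rule bind3_commute)
    finally show ?thesis .
  qed
  show ?thesis unfolding main p_def[symmetric]
  proof (rule prob_bind_ge, rule prob_bind_ge)
    fix r r'
    have "p \<le> ex p (\<lambda>a. ex q (\<lambda>c. ex p (\<lambda>a'. ex q (\<lambda>c'. Wf (DLB n (u r a c)) (DLB n (u r' a' c')) a a'))))"
      apply (rule arith_main[OF p q q2])
      unfolding u_def by (rule dlb_shape[OF assms(1,4) b_def j_def])+
    also have "\<dots> = measure_pmf.prob (bind_pmf (B i) (\<lambda>a. bind_pmf (B j) (\<lambda>c. bind_pmf (B i) (\<lambda>a'. bind_pmf (B j) (\<lambda>c'. winner n (u r a c) (u r' a' c')))))) {z. z i}"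
      unfolding B_def p_def[symmetric] q_def[symmetric]
      using p q bf(1) by (simp add: prob_bind_bern_ex prob_winner' u_def)
    finally show "p \<le> \<dots>" .
  qed
qed

end
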